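(* Let $g$ be a positive integer; suppose that for some $l$ the set $S_l$ contains a consecutive prospective prime pair with gap $g$, and let $j>l+2$. Let $(a,a+g)$ be a consecutive prospective prime pair with gap $g$ in $S_j$, and let $B$ be the set of $m_{j+1}\in\{0,\dots,P_{j+1}-1\}$ such that $b=a+m_{j+1}P_j\#$ and $b+g$ are both coprime to $P_{j+1}\#$. For $m_{j+1}\in B$ with $b=a+m_{j+1}P_j\#$, let $\widehat m(m_{j+1})$ be the unique $\widehat m\in\{0,\dots,P_{j+2}-1\}$ with $P_{j+2}\mid b+\widehat mP_{j+1}\#$, and $\widehat m'(m_{j+1})$ the unique $\widehat m'\in\{0,\dots,P_{j+2}-1\}$ with $P_{j+2}\mid b+g+\widehat m'P_{j+1}\#$ (these index the subsets $S_{j+2}^{(\widehat m)}$, $S_{j+2}^{(\widehat m')}$ of $S_{j+2}$ in which the corresponding lesser, resp. greater, component is disallowed). Then the map $m_{j+1}\mapsto\widehat m(m_{j+1})$ is injective on $B$, and the map $m_{j+1}\mapsto\widehat m'(m_{j+1})$ is injective on $B$.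
   Context: $P_k$ denotes the $k$-th prime ($P_1=2$), $P_k\#=\prod_{i=1}^kP_i$. $S_k=\{N\in\mathbb{N}:5\le N\le4+P_k\#\}$ and $S_k^{(m)}=\{N:5+mP_{k-1}\#\le N\le 4+(m+1)P_{k-1}\#\}$ for $0\le m\le P_k-1$. A prospective prime in $S_k$ is an $N\in S_k$ coprime to $P_k\#$; prospective primes $a<b$ in $S_k$ are consecutive if no integer strictly between them is coprime to $P_k\#$; a consecutive prospective prime pair with gap $g$ is a pair $(a,a+g)$ of consecutive prospective primes. *)

theory Defs
  imports "HOL-Computational_Algebra.Primes" "HOL-Library.Infinite_Set"
begin

(* P k = k-th prime, with P 1 = 2 (enumerate is 0-indexed) *)
definition P :: "nat \<Rightarrow> nat" where
  "P k = enumerate {p. prime p} (k - 1)"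

definition primorial :: "nat \<Rightarrow> nat" where
  "primorial k = (\<Prod>i\<in>{1..k}. P i)"

definition S :: "nat \<Rightarrow> nat set" where
  "S k = {5 .. 4 + primorial k}"

definition prospective :: "nat \<Rightarrow> nat \<Rightarrow> bool" where
  "prospective k N \<longleftrightarrow> N \<in> S k \<and> coprime N (primorial k)"

definition consecutive :: "nat \<Rightarrow> nat \<Rightarrow> nat \<Rightarrow> bool" where
  "consecutive k a b \<longleftrightarrow> prospective k a \<and> prospective k b \<and> a < b \<and>
     (\<forall>n. a < n \<and> n < b \<longrightarrow> \<not> coprime n (primorial k))"

definition cpp_gap :: "nat \<Rightarrow> nat \<Rightarrow> nat \<Rightarrow> bool" where
  "cpp_gap k g a \<longleftrightarrow> consecutive k a (a + g)"

definition Bset :: "nat \<Rightarrow> nat \<Rightarrow> nat \<Rightarrow> nat set" where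
  "Bset j g a = {m. m < P (j+1) \<and> coprime (a + m * primorial j) (primorial (j+1))
                 \<and> coprime (a + m * primorial j + g) (primorial (j+1))}"

definition mhat :: "nat \<Rightarrow> nat \<Rightarrow> nat \<Rightarrow> nat" where
  "mhat j a m = (THE mh. mh < P (j+2) \<and> P (j+2) dvd (a + m * primorial j + mh * primorial (j+1)))"

definition mhat' :: "nat \<Rightarrow> nat \<Rightarrow> nat \<Rightarrow> nat \<Rightarrow> nat" where
  "mhat' j g a m = (THE mh. mh < P (j+2) \<and> P (j+2) dvd (a + m * primorial j + g + mh * primorial (j+1)))"

end

theory Submission
  imports Defs "HOL-Number_Theory.Cong"
begin

lemma P_prime: "prime (P k)"
  unfolding P_def using enumerate_in_set[OF primes_infinite] by simp

lemma P_less: "i < k \<Longrightarrow> k \<ge> 1 \<Longrightarrow> i \<ge> 1 \<Longrightarrow> P i < P k"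
  unfolding P_def
  by (intro strict_monoD[OF strict_mono_enumerate]) (auto simp: primes_infinite)

lemma primorial_Suc: "primorial (Suc j) = primorial j * P (Suc j)"
  unfolding primorial_def by (simp add: prod.cl_ivl_Suc)

lemma primorial_coprime: "coprime (primorial k) (P (Suc k))"
  unfolding primorial_def
proof (rule prod_coprime_left)
  fix i assume "i \<in> {1..k}"
  then have "P i < P (Suc k)" by (intro P_less) auto
  then show "coprime (P i) (P (Suc k))"
    using P_prime by (metis primes_coprime less_irrefl)
qed

lemma ex1_sol:
  fixes q R c :: nat
  assumes q: "prime q" and cop: "coprime R q"
  shows "\<exists>!mh. mh < q \<and> q dvd (c + mh * R)"
proof -
  obtain x where x: "[R * x = 1] (mod q)"
    using cong_solve_coprime_nat[OF cop] by auto
  define y where "y = (x * (q - c mod q)) mod q"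
  have q0: "q > 0" using q prime_gt_0_nat by blast
  have "[c + y * R = c + (q - c mod q) * (R * x)] (mod q)"
  proof (intro cong_add cong_refl)
    define d where "d = q - c mod q"
    have "[(x * d) mod q * R = x * d * R] (mod q)"
      unfolding cong_def by (simp add: mod_mult_left_eq)
    then show "[y * R = (q - c mod q) * (R * x)] (mod q)"
      unfolding y_def d_def by (simp add: ac_simps)
  qed
  also have "[c + (q - c mod q) * (R * x) = c + (q - c mod q) * 1] (mod q)"
    by (intro cong_add cong_refl cong_mult x)
  also have "[c + (q - c mod q) * 1 = c mod q + (q - c mod q)] (mod q)"
    by (intro cong_add cong_refl) (simp_all add: cong_def)
  also have "c mod q + (q - c mod q) = q" using q0
    by (simp add: le_add_diff_inverse less_imp_le)
  finally have d: "q dvd (c + y * R)" by (simp add: cong_def mod_eq_0_iff_dvd)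
  have yl: "y < q" unfolding y_def using q0 by simp
  show ?thesis
  proof (rule ex1I[of _ y])
    show "y < q \<and> q dvd c + y * R" using d yl by simp
  next
    fix z assume z: "z < q \<and> q dvd c + z * R"
    have gen: "u = v" if "u < q" "v < q" "q dvd c + u * R" "q dvd c + v * R" "u \<le> v" for u v
    proof -
      have "q dvd (c + v * R) - (c + u * R)" using that dvd_diff_nat by blast
      also have "(c + v * R) - (c + u * R) = (v - u) * R" by (simp add: diff_mult_distrib)
      finally have "q dvd (v - u) * R" .
      then have "q dvd (v - u) \<or> q dvd R" using q prime_dvd_mult_iff by blast
      moreover have "\<not> q dvd R" using cop q
        by (metis coprime_commute coprime_absorb_left not_prime_unit)
      ultimately have "q dvd (v - u)" by blast
      moreover have "v - u < q" using that by linarith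
      ultimately have "v - u = 0" using dvd_imp_le by fastforce
      then show ?thesis using that by simp
    qed
    show "z = y" using gen[of z y] gen[of y z] z d yl by linarith
  qed
qed

lemma gen_inj:
  fixes q Q R c p :: nat
  assumes q: "prime q" and copQ: "coprime Q q" and copR: "coprime R q" and pq: "p \<le> q"
    and B: "B \<subseteq> {m. m < p}"
    and f: "\<And>m. f m = (THE mh. mh < q \<and> q dvd (c + m * Q + mh * R))"
  shows "inj_on f B"
proof
  fix m1 m2 assume m: "m1 \<in> B" "m2 \<in> B" and e: "f m1 = f m2"
  have spec: "f m < q \<and> q dvd (c + m * Q + f m * R)" for m
    unfolding f by (rule theI'[OF ex1_sol[OF q copR]])
  have gen: "u = v" if "u < q" "v < q" "f u = f v" "u \<le> v" for u v
  proof -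
    have "q dvd (c + v * Q + f v * R) - (c + u * Q + f u * R)" using spec dvd_diff_nat by blast
    also have "(c + v * Q + f v * R) - (c + u * Q + f u * R) = (v - u) * Q"
      using that by (simp add: diff_mult_distrib)
    finally have "q dvd (v - u) * Q" .
    then have "q dvd (v - u) \<or> q dvd Q" using q prime_dvd_mult_iff by blast
    moreover have "\<not> q dvd Q" using copQ q
      by (metis coprime_commute coprime_absorb_left not_prime_unit)
    ultimately have "q dvd (v - u)" by blast
    moreover have "v - u < q" using that by linarith
    ultimately have "v - u = 0" using dvd_imp_le by fastforce
    then show ?thesis using that by simp
  qed
  have "m1 < q" "m2 < q" using m B pq by auto
  then show "m1 = m2" using gen[of m1 m2] gen[of m2 m1] e by linarith
qed

theorem lemma3:
  fixes g l j a :: nat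
  assumes "g > 0"
    and "\<exists>a0. cpp_gap l g a0"
    and "j > l + 2"
    and "cpp_gap j g a"
  shows "inj_on (mhat j a) (Bset j g a) \<and> inj_on (mhat' j g a) (Bset j g a)"
proof -
  have q: "prime (P (j+2))" by (rule P_prime)
  have pq: "P (j+1) \<le> P (j+2)" using P_less[of "j+1" "j+2"] by simp
  have copR: "coprime (primorial (j+1)) (P (j+2))"
    using primorial_coprime[of "j+1"] by simp
  have copQ: "coprime (primorial j) (P (j+2))"
    using copR primorial_Suc[of j] by simp
  have B: "Bset j g a \<subseteq> {m. m < P (j+1)}" unfolding Bset_def by auto
  have 1: "inj_on (mhat j a) (Bset j g a)"
    by (rule gen_inj[OF q copQ copR pq B]) (simp add: mhat_def)
  have 2: "inj_on (mhat' j g a) (Bset j g a)"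
    by (rule gen_inj[OF q copQ copR pq B, where c = "a + g"]) (simp add: mhat'_def add_ac)
  show ?thesis using 1 2 by blast
qed

end
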